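(* Let $(Z,\Delta)$ be a foliated surface. Every regular leaf of $\Delta$ is non-special; equivalently, every special leaf of $\Delta$ is singular.
   Context: A foliated surface is a pair $(Z,\Delta)$ with $Z$ a two-dimensional topological manifold (possibly with boundary) and $\Delta$ a one-dimensional foliation on $Z$ such that each connected component of $\partial Z$ is a leaf. For $A\subset Z$ its saturation $\mathrm{Sat}(A)$ is the union of all leaves meeting $A$. For a leaf $\omega$ let $\mathrm{hcl}(\omega)=\bigcap_{N}\overline{\mathrm{Sat}(N)}$, where $N$ runs over all open neighbourhoods of $\omega$; $\omega$ is special if $\omega\neq\mathrm{hcl}(\omega)$. A leaf $\omega\subset \operatorname{Int} Z$ is regular if there is a saturated neighbourhood $U$ of $\omega$ such that $(\overline{U},U)$ is foliated homeomorphic (leaves to leaves) to $(\mathbb{R}\times[-1,1],\mathbb{R}\times(-1,1))$ foliated by horizontal lines, with $\omega$ going to $\mathbb{R}\times 0$; a leaf $\omega\subset\partial Z$ is regular if there is such $U$ with $(\overline{U},U)$ foliated homeomorphic to $(\mathbb{R}\times[0,1],\mathbb{R}\times[0,1))$ with $\omega$ going to $\mathbb{R}\times 0$. Non-regular leaves are singular. *)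

theory Defs
  imports "HOL-Analysis.Analysis"
begin

definition halfplane :: "(real \<times> real) set" where
  "halfplane = {p. snd p \<ge> 0}"

definition surface_chart :: "'a topology \<Rightarrow> 'a set \<Rightarrow> ('a \<Rightarrow> real \<times> real) \<Rightarrow> bool" where
  "surface_chart Z W \<phi> \<longleftrightarrow> openin Z W \<and>
     (\<exists>V. openin (subtopology euclidean halfplane) V \<and>
          homeomorphic_map (subtopology Z W) (subtopology euclidean V) \<phi>)"

definition mboundary :: "'a topology \<Rightarrow> 'a set" where
  "mboundary Z = {z \<in> topspace Z. \<exists>W \<phi>. surface_chart Z W \<phi> \<and> z \<in> W \<and> snd (\<phi> z) = 0}"

definition minterior :: "'a topology \<Rightarrow> 'a set" where
  "minterior Z = topspace Z - mboundary Z"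

text \<open>Foliated atlas: charts covering Z, the foliation being given in every chart by the
  horizontal lines; the transverse coordinates of overlapping charts are locally compatible
  (locally, the horizontal level sets of one chart are those of the other).\<close>
definition foliated_atlas :: "'a topology \<Rightarrow> ('a set \<times> ('a \<Rightarrow> real \<times> real)) set \<Rightarrow> bool" where
  "foliated_atlas Z A \<longleftrightarrow>
     (\<forall>(W, \<phi>) \<in> A. surface_chart Z W \<phi>) \<and>
     (\<forall>z \<in> topspace Z. \<exists>(W, \<phi>) \<in> A. z \<in> W) \<and>
     (\<forall>(W1, \<phi>1) \<in> A. \<forall>(W2, \<phi>2) \<in> A. \<forall>z \<in> W1 \<inter> W2.
        \<exists>N. openin Z N \<and> z \<in> N \<and> N \<subseteq> W1 \<inter> W2 \<and>
          (\<forall>x \<in> N. \<forall>y \<in> N. snd (\<phi>1 x) = snd (\<phi>1 y) \<longleftrightarrow> snd (\<phi>2 x) = snd (\<phi>2 y)))"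

text \<open>x and y lie in a common plaque of some chart of A (plaque = connected component of a
  horizontal slice of the chart image).\<close>
definition plaque_rel :: "('a set \<times> ('a \<Rightarrow> real \<times> real)) set \<Rightarrow> 'a \<Rightarrow> 'a \<Rightarrow> bool" where
  "plaque_rel A x y \<longleftrightarrow>
     (\<exists>(W, \<phi>) \<in> A. x \<in> W \<and> y \<in> W \<and>
        (\<exists>C. connected C \<and> C \<subseteq> \<phi> ` W \<inter> {p. snd p = snd (\<phi> x)} \<and> \<phi> x \<in> C \<and> \<phi> y \<in> C))"

text \<open>A foliated surface (Z, Delta): Z a 2-dimensional topological manifold (Hausdorff, second
  countable, locally modelled on the half-plane), Delta the set of leaves of a one-dimensional
  foliation (the classes of the equivalence relation generated by plaques of a foliated atlas),
  such that every connected component of the boundary of Z is a leaf.\<close>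
definition foliated_surface :: "'a topology \<Rightarrow> 'a set set \<Rightarrow> bool" where
  "foliated_surface Z \<Delta> \<longleftrightarrow>
     Hausdorff_space Z \<and> second_countable Z \<and>
     (\<exists>A. foliated_atlas Z A \<and>
          \<Delta> = {{y \<in> topspace Z. (plaque_rel A)\<^sup>*\<^sup>* x y} | x. x \<in> topspace Z}) \<and>
     (\<forall>C \<in> connected_components_of (subtopology Z (mboundary Z)). C \<in> \<Delta>)"

definition Sat :: "'a set set \<Rightarrow> 'a set \<Rightarrow> 'a set" where
  "Sat \<Delta> S = \<Union>{L \<in> \<Delta>. L \<inter> S \<noteq> {}}"

definition hcl :: "'a topology \<Rightarrow> 'a set set \<Rightarrow> 'a set \<Rightarrow> 'a set" where
  "hcl Z \<Delta> \<omega> = \<Inter>{Z closure_of (Sat \<Delta> N) | N. openin Z N \<and> \<omega> \<subseteq> N}"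

definition special_leaf :: "'a topology \<Rightarrow> 'a set set \<Rightarrow> 'a set \<Rightarrow> bool" where
  "special_leaf Z \<Delta> \<omega> \<longleftrightarrow> \<omega> \<in> \<Delta> \<and> \<omega> \<noteq> hcl Z \<Delta> \<omega>"

text \<open>h is a foliated homeomorphism from (closure U, U) onto (R x J', R x J) (J' the closure
  of J), with omega going to R x {0}: leaves of Delta in closure U go to horizontal lines.\<close>
definition regular_nbhd ::
  "'a topology \<Rightarrow> 'a set set \<Rightarrow> 'a set \<Rightarrow> real set \<Rightarrow> real set \<Rightarrow> bool" where
  "regular_nbhd Z \<Delta> \<omega> J' J \<longleftrightarrow>
     (\<exists>U (h :: 'a \<Rightarrow> real \<times> real). U \<subseteq> topspace Z \<and> \<omega> \<subseteq> Z interior_of U \<and> Sat \<Delta> U = U \<and>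
        homeomorphic_map (subtopology Z (Z closure_of U))
                         (subtopology euclidean (UNIV \<times> J')) h \<and>
        h ` U = UNIV \<times> J \<and> h ` \<omega> = UNIV \<times> {0} \<and>
        (\<forall>x \<in> Z closure_of U. \<forall>y \<in> Z closure_of U.
           (\<exists>L \<in> \<Delta>. x \<in> L \<and> y \<in> L) \<longleftrightarrow> snd (h x) = snd (h y)))"

definition regular_leaf :: "'a topology \<Rightarrow> 'a set set \<Rightarrow> 'a set \<Rightarrow> bool" where
  "regular_leaf Z \<Delta> \<omega> \<longleftrightarrow> \<omega> \<in> \<Delta> \<and>
     ((\<omega> \<subseteq> minterior Z \<and> regular_nbhd Z \<Delta> \<omega> {-1..1} {-1<..<1}) \<or>
      (\<omega> \<subseteq> mboundary Z \<and> regular_nbhd Z \<Delta> \<omega> {0..1} {0..<1}))"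

definition singular_leaf :: "'a topology \<Rightarrow> 'a set set \<Rightarrow> 'a set \<Rightarrow> bool" where
  "singular_leaf Z \<Delta> \<omega> \<longleftrightarrow> \<omega> \<in> \<Delta> \<and> \<not> regular_leaf Z \<Delta> \<omega>"

end

theory Submission
  imports Defs
begin

lemma hcl_sub:
  assumes "openin Z N" "\<omega> \<subseteq> N"
  shows "hcl Z \<Delta> \<omega> \<subseteq> Z closure_of (Sat \<Delta> N)"
  using assms unfolding hcl_def by blast

lemma reg_hcl:
  assumes "regular_nbhd Z \<Delta> \<omega> J' J"
  shows "hcl Z \<Delta> \<omega> \<subseteq> \<omega>"
proof -
  obtain U and h :: "'a \<Rightarrow> real \<times> real" where U: "U \<subseteq> topspace Z" "\<omega> \<subseteq> Z interior_of U" "Sat \<Delta> U = U"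
    and hm: "homeomorphic_map (subtopology Z (Z closure_of U)) (subtopology euclidean (UNIV \<times> J')) h"
    and hw: "h ` \<omega> = UNIV \<times> {0}"
    and hL: "\<forall>x \<in> Z closure_of U. \<forall>y \<in> Z closure_of U.
           (\<exists>L \<in> \<Delta>. x \<in> L \<and> y \<in> L) \<longleftrightarrow> snd (h x) = snd (h y)"
    using assms unfolding regular_nbhd_def by blast
  define C where "C = Z closure_of U"
  have CZ: "C \<subseteq> topspace Z" unfolding C_def by (rule closure_of_subset_topspace)
  have UC: "U \<subseteq> C" unfolding C_def using U(1) by (rule closure_of_subset)
  have iU: "Z interior_of U \<subseteq> U" by (rule interior_of_subset)
  have wC: "\<omega> \<subseteq> C" using U(2) iU UC by blast
  have ts: "topspace (subtopology Z C) = C" using CZ by auto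
  have "inj_on h (topspace (subtopology Z C))"
    using hm homeomorphic_imp_injective_map unfolding C_def by blast
  hence inj: "inj_on h C" by (simp only: ts mem_Collect_eq)
  have cm: "continuous_map (subtopology Z C) euclideanreal (\<lambda>x. snd (h x))"
  proof -
    have "continuous_map (subtopology Z C) (subtopology euclidean (UNIV \<times> J')) h"
      using hm unfolding C_def homeomorphic_map_def by (metis homeomorphic_imp_continuous_map homeomorphic_map_def)
    then have "continuous_map (subtopology Z C) euclidean h"
      using continuous_map_from_subtopology_mono continuous_map_into_fulltopology by blast
    moreover have "continuous_map euclidean euclideanreal (snd :: real \<times> real \<Rightarrow> real)"
      by (simp add: continuous_on_snd continuous_on_id)
    ultimately have "continuous_map (subtopology Z C) euclideanreal (snd \<circ> h)"
      by (rule continuous_map_compose)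
    then show ?thesis by (simp add: o_def)
  qed
  have clC: "closedin Z C" unfolding C_def by simp
  have key: "hcl Z \<Delta> \<omega> \<subseteq> {x \<in> C. \<bar>snd (h x)\<bar> \<le> e}" if e: "e > 0" for e
  proof -
    have "openin euclideanreal {t. \<bar>t\<bar> < e}"
      by (simp add: open_Collect_less continuous_intros)
    hence "openin (subtopology Z C) {x \<in> topspace (subtopology Z C). snd (h x) \<in> {t. \<bar>t\<bar> < e}}"
      using openin_continuous_map_preimage[OF cm] by blast
    hence oT: "openin (subtopology Z C) {x \<in> C. \<bar>snd (h x)\<bar> < e}" by (simp only: ts mem_Collect_eq)
    then obtain S where S: "openin Z S" "{x \<in> C. \<bar>snd (h x)\<bar> < e} = S \<inter> C"
      unfolding openin_subtopology by blast
    define N where "N = Z interior_of U \<inter> S"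
    have oN: "openin Z N" unfolding N_def using S(1) by (simp add: openin_Int)
    have NT: "N \<subseteq> {x \<in> C. \<bar>snd (h x)\<bar> < e}" unfolding N_def using S(2) iU UC by blast
    have wN: "\<omega> \<subseteq> N"
    proof
      fix x assume x: "x \<in> \<omega>"
      have "h x \<in> UNIV \<times> {0}" using hw x by blast
      hence "x \<in> {x \<in> C. \<bar>snd (h x)\<bar> < e}" using x wC e by auto
      thus "x \<in> N" unfolding N_def using S(2) x U(2) by blast
    qed
    have "closedin euclideanreal {t. \<bar>t\<bar> \<le> e}"
      by (simp add: closed_Collect_le continuous_intros)
    hence "closedin (subtopology Z C) {x \<in> topspace (subtopology Z C). snd (h x) \<in> {t. \<bar>t\<bar> \<le> e}}"
      using closedin_continuous_map_preimage[OF cm] by blast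
    hence "closedin (subtopology Z C) {x \<in> C. \<bar>snd (h x)\<bar> \<le> e}" by (simp only: ts mem_Collect_eq)
    hence cK: "closedin Z {x \<in> C. \<bar>snd (h x)\<bar> \<le> e}"
      using clC closedin_trans_full by blast
    have SK: "Sat \<Delta> N \<subseteq> {x \<in> C. \<bar>snd (h x)\<bar> \<le> e}"
    proof
      fix y assume "y \<in> Sat \<Delta> N"
      then obtain L x where L: "L \<in> \<Delta>" "y \<in> L" "x \<in> L" "x \<in> N" unfolding Sat_def by blast
      have "L \<subseteq> Sat \<Delta> U" unfolding Sat_def using L NT UC iU N_def by blast
      hence LC: "L \<subseteq> C" using U(3) UC by blast
      have "snd (h x) = snd (h y)" using hL L LC unfolding C_def by blast
      thus "y \<in> {x \<in> C. \<bar>snd (h x)\<bar> \<le> e}" using L LC NT by auto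
    qed
    have "hcl Z \<Delta> \<omega> \<subseteq> Z closure_of (Sat \<Delta> N)" by (rule hcl_sub[OF oN wN])
    also have "\<dots> \<subseteq> {x \<in> C. \<bar>snd (h x)\<bar> \<le> e}" by (rule closure_of_minimal[OF SK cK])
    finally show ?thesis .
  qed
  show ?thesis
  proof
    fix y assume y: "y \<in> hcl Z \<Delta> \<omega>"
    have yC: "y \<in> C" using key[of 1] y by auto
    have "\<bar>snd (h y)\<bar> \<le> e" if "e > 0" for e using key[OF that] y by auto
    hence "snd (h y) = 0"
      by (metis abs_ge_zero abs_le_zero_iff dense not_le)
    hence "h y \<in> h ` \<omega>" using hw by (metis SigmaI UNIV_I prod.collapse singletonI)
    then obtain x where x: "x \<in> \<omega>" "h y = h x" by (rule imageE)
    have "x \<in> C" using x(1) wC by blast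
    hence "x = y" using inj_onD[OF inj x(2)[symmetric] _ yC] by blast
    thus "y \<in> \<omega>" using x(1) by simp
  qed
qed

theorem lemma2p6:
  fixes Z :: "'a topology" and \<Delta> :: "'a set set" and \<omega> :: "'a set"
  assumes "foliated_surface Z \<Delta>" and "\<omega> \<in> \<Delta>" and "regular_leaf Z \<Delta> \<omega>"
  shows "\<not> special_leaf Z \<Delta> \<omega>"
proof -
  have "regular_nbhd Z \<Delta> \<omega> {-1..1} {-1<..<1} \<or> regular_nbhd Z \<Delta> \<omega> {0..1} {0..<1}"
    using assms(3) unfolding regular_leaf_def by blast
  then obtain J' J where R: "regular_nbhd Z \<Delta> \<omega> J' J" by blast
  then obtain U where "\<omega> \<subseteq> Z interior_of U" unfolding regular_nbhd_def by blast
  hence wZ: "\<omega> \<subseteq> topspace Z" by (meson interior_of_subset_topspace order_trans)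
  have "\<omega> \<subseteq> hcl Z \<Delta> \<omega>"
    unfolding hcl_def
  proof (rule Inter_greatest)
    fix K assume "K \<in> {Z closure_of Sat \<Delta> N |N. openin Z N \<and> \<omega> \<subseteq> N}"
    then obtain N where N: "K = Z closure_of Sat \<Delta> N" "openin Z N" "\<omega> \<subseteq> N" by blast
    have "\<omega> \<subseteq> Sat \<Delta> N" unfolding Sat_def using assms(2) N(3) by blast
    moreover have "topspace Z \<inter> Sat \<Delta> N \<subseteq> K" unfolding N(1) by (rule closure_of_subset_Int)
    ultimately show "\<omega> \<subseteq> K" using wZ by blast
  qed
  with reg_hcl[OF R] show ?thesis unfolding special_leaf_def by blast
qed

end
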